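(* Let $X_1,\dots,X_n$ be features and $Y$ a target that is not a.s. constant, $\mathcal{F}=\{1,\dots,n\}$. If $Y=g(X_k)$ almost surely for some function $g$ and some $k\in\mathcal{F}$ (i.e. feature $k$ is fully informative), then $\mathrm{FI}(i)\le\mathrm{FI}(k)$ for every $i\in\mathcal{F}$.
   Context: All random variables are discrete with finite support and defined on a common probability space. For discrete random variables (or random vectors) $X$ and $Y$, define $$\mathrm{UD}(X,Y):=\sum_x p_X(x)\sum_y \bigl|p_{Y\mid X=x}(y)-p_Y(y)\bigr|,$$ and, when $Y$ is not almost surely constant, $\mathrm{Dep}(X,Y):=\mathrm{UD}(X,Y)/\mathrm{UD}(Y,Y)$. Given features $X_1,\dots,X_n$ with index set $\mathcal{F}=\{1,\dots,n\}$ and $S\subseteq\mathcal{F}$, write $X_S=(X_i)_{i\in S}$ ($X_\emptyset$ constant) and $\mathrm{Dep}(S,Y):=\mathrm{Dep}(X_S,Y)$. The Berkelmans–Pries feature importance is $$\mathrm{FI}(i):=\sum_{S\subseteq\mathcal{F}\setminus\{i\}}\frac{|S|!\,(n-|S|-1)!}{n!}\bigl(\mathrm{Dep}(S\cup\{i\},Y)-\mathrm{Dep}(S,Y)\bigr).$$ *)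

theory Defs
  imports "HOL-Probability.Probability"
begin

definition prb :: "'w pmf \<Rightarrow> ('w \<Rightarrow> bool) \<Rightarrow> real" where
  "prb M P = measure_pmf.prob M {w. P w}"

text \<open>UD(X,Y): sums range over the (finite) supports of X and Y; values outside
  the support contribute zero.  p_{Y|X=x}(y) = P(X=x, Y=y) / P(X=x).\<close>
definition UD :: "'w pmf \<Rightarrow> ('w \<Rightarrow> 'c) \<Rightarrow> ('w \<Rightarrow> 'b) \<Rightarrow> real" where
  "UD M X Y = (\<Sum>x\<in>X ` set_pmf M. prb M (\<lambda>w. X w = x) *
      (\<Sum>y\<in>Y ` set_pmf M.
         \<bar>prb M (\<lambda>w. X w = x \<and> Y w = y) / prb M (\<lambda>w. X w = x) - prb M (\<lambda>w. Y w = y)\<bar>))"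

definition Dep :: "'w pmf \<Rightarrow> ('w \<Rightarrow> 'c) \<Rightarrow> ('w \<Rightarrow> 'b) \<Rightarrow> real" where
  "Dep M X Y = UD M X Y / UD M Y Y"

text \<open>X_S: the random vector (X_i)_{i in S}, as a partial map on indices (constant for S = {}).\<close>
definition XS :: "(nat \<Rightarrow> 'w \<Rightarrow> 'a) \<Rightarrow> nat set \<Rightarrow> 'w \<Rightarrow> (nat \<Rightarrow> 'a option)" where
  "XS X S = (\<lambda>w i. if i \<in> S then Some (X i w) else None)"

definition FI :: "'w pmf \<Rightarrow> nat \<Rightarrow> (nat \<Rightarrow> 'w \<Rightarrow> 'a) \<Rightarrow> ('w \<Rightarrow> 'b) \<Rightarrow> nat \<Rightarrow> real" where
  "FI M n X Y i = (\<Sum>S\<in>Pow ({1..n} - {i}).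
      (fact (card S) * fact (n - card S - 1) / fact n) *
      (Dep M (XS X (S \<union> {i})) Y - Dep M (XS X S) Y))"

end

theory Submission
  imports Defs
begin


lemma prb_cong: "(\<And>w. w \<in> set_pmf M \<Longrightarrow> P w = Q w) \<Longrightarrow> prb M P = prb M Q"
proof -
  assume h: "\<And>w. w \<in> set_pmf M \<Longrightarrow> P w = Q w"
  have "{w. P w} \<inter> set_pmf M = {w. Q w} \<inter> set_pmf M" using h by auto
  then show ?thesis unfolding prb_def by (metis measure_Int_set_pmf)
qed

lemma prb_nonneg: "0 \<le> prb M P" unfolding prb_def by simp

lemma prb_mono: "(\<And>w. P w \<Longrightarrow> Q w) \<Longrightarrow> prb M P \<le> prb M Q"
  unfolding prb_def by (intro measure_pmf.finite_measure_mono) auto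

lemma prb_True: "prb M (\<lambda>w. True) = 1" unfolding prb_def by simp

lemma prb_pos: "w \<in> set_pmf M \<Longrightarrow> P w \<Longrightarrow> 0 < prb M P"
  unfolding prb_def by (rule measure_pmf_posI) auto

lemma prb_sum:
  assumes "finite A"
  shows "(\<Sum>z\<in>A. prb M (\<lambda>w. Z w = z \<and> Q w)) = prb M (\<lambda>w. Z w \<in> A \<and> Q w)"
proof -
  have "prb M (\<lambda>w. Z w \<in> A \<and> Q w) = measure_pmf.prob M (\<Union>z\<in>A. {w. Z w = z \<and> Q w})"
    unfolding prb_def by (rule arg_cong[where f="measure_pmf.prob M"]) auto
  also have "\<dots> = (\<Sum>z\<in>A. measure_pmf.prob M {w. Z w = z \<and> Q w})"
    using assms by (intro measure_pmf.finite_measure_finite_Union) (auto simp: disjoint_family_on_def)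
  finally show ?thesis unfolding prb_def by simp
qed

lemma prb_sum_img:
  assumes "finite (Z ` set_pmf M)"
  shows "(\<Sum>z\<in>Z ` set_pmf M. prb M (\<lambda>w. Z w = z \<and> Q w)) = prb M Q"
  using prb_sum[OF assms, where M=M and Z=Z and Q=Q] prb_cong[of M "\<lambda>w. Z w \<in> Z ` set_pmf M \<and> Q w" Q] by auto

lemma real_key:
  fixes a p :: "'z \<Rightarrow> real"
  assumes A: "finite A" and ap: "\<And>z. z \<in> A \<Longrightarrow> 0 \<le> a z \<and> a z \<le> p z"
    and sa: "(\<Sum>z\<in>A. a z) = q" and sp: "(\<Sum>z\<in>A. p z) = 1"
  shows "(\<Sum>z\<in>A. \<bar>a z - p z * q\<bar>) \<le> 2 * q * (1 - q)"
    and "(\<And>z. z \<in> A \<Longrightarrow> a z = 0 \<or> a z = p z) \<Longrightarrow> (\<Sum>z\<in>A. \<bar>a z - p z * q\<bar>) = 2 * q * (1 - q)"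
proof -
  have q0: "0 \<le> q" using sa ap by (metis sum_nonneg)
  have q1: "q \<le> 1" using sa sp ap by (metis sum_mono)
  have abs: "\<bar>d\<bar> = 2 * max d 0 - d" for d :: real by auto
  have "(\<Sum>z\<in>A. p z * q) = q" using sp by (simp add: sum_distrib_right[symmetric])
  then have sd: "(\<Sum>z\<in>A. a z - p z * q) = 0" using sa
    by (simp only: sum_subtractf)
  have e: "(\<Sum>z\<in>A. \<bar>a z - p z * q\<bar>) = 2 * (\<Sum>z\<in>A. max (a z - p z * q) 0)"
  proof -
    have "(\<Sum>z\<in>A. \<bar>a z - p z * q\<bar>) = (\<Sum>z\<in>A. 2 * max (a z - p z * q) 0 - (a z - p z * q))"
      by (rule sum.cong) (simp_all only: abs)
    also have "\<dots> = 2 * (\<Sum>z\<in>A. max (a z - p z * q) 0) - (\<Sum>z\<in>A. a z - p z * q)"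
      by (simp only: sum_subtractf sum_distrib_left)
    finally show ?thesis using sd by simp
  qed
  have r: "(\<Sum>z\<in>A. a z * (1 - q)) = q * (1 - q)" using sa by (simp add: sum_distrib_right[symmetric])
  have "(\<Sum>z\<in>A. max (a z - p z * q) 0) \<le> (\<Sum>z\<in>A. a z * (1 - q))"
  proof (rule sum_mono)
    fix z assume "z \<in> A"
    with ap have "0 \<le> a z" "a z \<le> p z" by auto
    then have "a z * q \<le> p z * q" using q0 by (simp add: mult_right_mono)
    moreover have "0 \<le> a z * (1 - q)" using \<open>0 \<le> a z\<close> q1 by simp
    ultimately show "max (a z - p z * q) 0 \<le> a z * (1 - q)" by (simp add: algebra_simps)
  qed
  then show "(\<Sum>z\<in>A. \<bar>a z - p z * q\<bar>) \<le> 2 * q * (1 - q)" using e r by simp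
  assume h: "\<And>z. z \<in> A \<Longrightarrow> a z = 0 \<or> a z = p z"
  have "(\<Sum>z\<in>A. max (a z - p z * q) 0) = (\<Sum>z\<in>A. a z * (1 - q))"
  proof (rule sum.cong)
    fix z assume "z \<in> A"
    with ap h have pz: "0 \<le> a z" "a z \<le> p z" "a z = 0 \<or> a z = p z" by auto
    then have "0 \<le> p z" by linarith
    have "0 \<le> p z * (1 - q)" "0 \<le> p z * q" using \<open>0 \<le> p z\<close> q0 q1 by simp_all
    then show "max (a z - p z * q) 0 = a z * (1 - q)" using pz(3)
      by (auto simp: algebra_simps)
  qed simp
  then show "(\<Sum>z\<in>A. \<bar>a z - p z * q\<bar>) = 2 * q * (1 - q)" using e r by simp
qed

definition DD :: "'w pmf \<Rightarrow> ('w \<Rightarrow> 'b) \<Rightarrow> real" where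
  "DD M Y = (\<Sum>y\<in>Y ` set_pmf M. 2 * prb M (\<lambda>w. Y w = y) * (1 - prb M (\<lambda>w. Y w = y)))"

lemma UD_swap:
  shows "UD M Z Y = (\<Sum>y\<in>Y ` set_pmf M. \<Sum>z\<in>Z ` set_pmf M.
     \<bar>prb M (\<lambda>w. Z w = z \<and> Y w = y) - prb M (\<lambda>w. Z w = z) * prb M (\<lambda>w. Y w = y)\<bar>)"
proof -
  have "UD M Z Y = (\<Sum>z\<in>Z ` set_pmf M. \<Sum>y\<in>Y ` set_pmf M.
     \<bar>prb M (\<lambda>w. Z w = z \<and> Y w = y) - prb M (\<lambda>w. Z w = z) * prb M (\<lambda>w. Y w = y)\<bar>)"
    unfolding UD_def
  proof (rule sum.cong[OF refl])
    fix z assume "z \<in> Z ` set_pmf M"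
    then obtain w where "w \<in> set_pmf M" "Z w = z" by auto
    then have p: "0 < prb M (\<lambda>w. Z w = z)" by (intro prb_pos) auto
    show "prb M (\<lambda>w. Z w = z) * (\<Sum>y\<in>Y ` set_pmf M. \<bar>prb M (\<lambda>w. Z w = z \<and> Y w = y) / prb M (\<lambda>w. Z w = z) - prb M (\<lambda>w. Y w = y)\<bar>)
      = (\<Sum>y\<in>Y ` set_pmf M. \<bar>prb M (\<lambda>w. Z w = z \<and> Y w = y) - prb M (\<lambda>w. Z w = z) * prb M (\<lambda>w. Y w = y)\<bar>)"
      unfolding sum_distrib_left
    proof (rule sum.cong[OF refl])
      fix y
      have "prb M (\<lambda>w. Z w = z) * \<bar>prb M (\<lambda>w. Z w = z \<and> Y w = y) / prb M (\<lambda>w. Z w = z) - prb M (\<lambda>w. Y w = y)\<bar>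
        = \<bar>prb M (\<lambda>w. Z w = z) * (prb M (\<lambda>w. Z w = z \<and> Y w = y) / prb M (\<lambda>w. Z w = z) - prb M (\<lambda>w. Y w = y))\<bar>"
        using p by (simp add: abs_mult)
      also have "\<dots> = \<bar>prb M (\<lambda>w. Z w = z \<and> Y w = y) - prb M (\<lambda>w. Z w = z) * prb M (\<lambda>w. Y w = y)\<bar>"
        using p by (simp add: right_diff_distrib)
      finally show "prb M (\<lambda>w. Z w = z) * \<bar>prb M (\<lambda>w. Z w = z \<and> Y w = y) / prb M (\<lambda>w. Z w = z) - prb M (\<lambda>w. Y w = y)\<bar>
        = \<bar>prb M (\<lambda>w. Z w = z \<and> Y w = y) - prb M (\<lambda>w. Z w = z) * prb M (\<lambda>w. Y w = y)\<bar>" .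
    qed
  qed
  then show ?thesis by (simp add: sum.swap[of _ "Z ` set_pmf M"])
qed

lemma sum_p1: "finite (Z ` set_pmf M) \<Longrightarrow> (\<Sum>z\<in>Z ` set_pmf M. prb M (\<lambda>w. Z w = z)) = 1"
  using prb_sum_img[where M=M and Z=Z and Q="\<lambda>_. True"] prb_True[of M] by simp

lemma UD_le:
  assumes fz: "finite (Z ` set_pmf M)" and fy: "finite (Y ` set_pmf M)"
  shows "UD M Z Y \<le> DD M Y"
  unfolding UD_swap DD_def
proof (rule sum_mono)
  fix y assume "y \<in> Y ` set_pmf M"
  show "(\<Sum>z\<in>Z ` set_pmf M. \<bar>prb M (\<lambda>w. Z w = z \<and> Y w = y) - prb M (\<lambda>w. Z w = z) * prb M (\<lambda>w. Y w = y)\<bar>)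
     \<le> 2 * prb M (\<lambda>w. Y w = y) * (1 - prb M (\<lambda>w. Y w = y))"
    by (rule real_key(1)[OF fz]) (auto intro!: prb_mono simp: prb_nonneg prb_sum_img[OF fz] sum_p1[OF fz])
qed

lemma UD_eq:
  assumes fz: "finite (Z ` set_pmf M)" and fy: "finite (Y ` set_pmf M)"
    and h: "\<And>w. w \<in> set_pmf M \<Longrightarrow> Y w = h (Z w)"
  shows "UD M Z Y = DD M Y"
  unfolding UD_swap DD_def
proof (rule sum.cong[OF refl])
  fix y assume "y \<in> Y ` set_pmf M"
  have c: "prb M (\<lambda>w. Z w = z \<and> Y w = y) = 0 \<or> prb M (\<lambda>w. Z w = z \<and> Y w = y) = prb M (\<lambda>w. Z w = z)" for z
  proof -
    have e: "prb M (\<lambda>w. Z w = z \<and> Y w = y) = prb M (\<lambda>w. Z w = z \<and> h z = y)"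
      by (rule prb_cong) (auto simp: h)
    show ?thesis
    proof (cases "h z = y")
      case True then show ?thesis using e by simp
    next
      case False then show ?thesis using e by (simp add: prb_def)
    qed
  qed
  show "(\<Sum>z\<in>Z ` set_pmf M. \<bar>prb M (\<lambda>w. Z w = z \<and> Y w = y) - prb M (\<lambda>w. Z w = z) * prb M (\<lambda>w. Y w = y)\<bar>)
     = 2 * prb M (\<lambda>w. Y w = y) * (1 - prb M (\<lambda>w. Y w = y))"
    by (rule real_key(2)[OF fz]) (auto intro!: prb_mono simp: prb_nonneg prb_sum_img[OF fz] sum_p1[OF fz] c)
qed

lemma Dep_le:
  assumes fz: "finite (Z ` set_pmf M)" and fy: "finite (Y ` set_pmf M)"
  shows "Dep M Z Y \<le> DD M Y / DD M Y"
proof -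
  have "UD M Y Y = DD M Y" by (rule UD_eq[OF fy fy, where h=id]) simp
  moreover have "0 \<le> DD M Y" unfolding DD_def
    by (intro sum_nonneg mult_nonneg_nonneg) (auto simp: prb_nonneg prb_def)
  ultimately show ?thesis unfolding Dep_def using UD_le[OF fz fy] by (simp add: divide_right_mono)
qed

lemma Dep_eq:
  assumes fz: "finite (Z ` set_pmf M)" and fy: "finite (Y ` set_pmf M)"
    and h: "\<And>w. w \<in> set_pmf M \<Longrightarrow> Y w = h (Z w)"
  shows "Dep M Z Y = DD M Y / DD M Y"
proof -
  have "UD M Y Y = DD M Y" by (rule UD_eq[OF fy fy, where h=id]) simp
  then show ?thesis unfolding Dep_def using UD_eq[OF fz fy h] by simp
qed



lemma sum_Pow_insert:
  assumes "finite A" "a \<notin> A"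
  shows "sum f (Pow (insert a A)) = sum f (Pow A) + (\<Sum>S\<in>Pow A. f (insert a S))"
proof -
  have inj: "inj_on (insert a) (Pow A)" using assms(2)
    by (auto simp: inj_on_def)
  have d: "Pow A \<inter> insert a ` Pow A = {}" using assms(2) by auto
  have "sum f (Pow (insert a A)) = sum f (Pow A) + sum f (insert a ` Pow A)"
    unfolding Pow_insert using assms(1) d by (intro sum.union_disjoint) auto
  also have "sum f (insert a ` Pow A) = (\<Sum>S\<in>Pow A. f (insert a S))"
    using inj by (simp add: sum.reindex)
  finally show ?thesis .
qed

lemma fin_XS:
  assumes "finite S" "\<And>i. i \<in> S \<Longrightarrow> finite (X i ` set_pmf M)"
  shows "finite (XS X S ` set_pmf M)"
proof -
  have "XS X S ` set_pmf M \<subseteq> (\<lambda>h i. if i \<in> S then Some (h i) else None) ` (PiE S (\<lambda>i. X i ` set_pmf M))"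
  proof
    fix f assume "f \<in> XS X S ` set_pmf M"
    then obtain w where w: "w \<in> set_pmf M" "f = XS X S w" by auto
    have "restrict (\<lambda>i. X i w) S \<in> PiE S (\<lambda>i. X i ` set_pmf M)" using w(1) by auto
    moreover have "f = (\<lambda>i. if i \<in> S then Some (restrict (\<lambda>i. X i w) S i) else None)"
      using w(2) by (auto simp: XS_def)
    ultimately show "f \<in> (\<lambda>h i. if i \<in> S then Some (h i) else None) ` (PiE S (\<lambda>i. X i ` set_pmf M))" by blast
  qed
  moreover have "finite (PiE S (\<lambda>i. X i ` set_pmf M))" using assms by (intro finite_PiE) auto
  ultimately show ?thesis by (meson finite_imageI finite_subset)
qed

theorem mainTheorem11:
  fixes M :: "'w pmf" and n :: nat and X :: "nat \<Rightarrow> 'w \<Rightarrow> 'a" and Y :: "'w \<Rightarrow> 'b"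
    and g :: "'a \<Rightarrow> 'b" and k :: nat
  assumes finX: "\<And>i. i \<in> {1..n} \<Longrightarrow> finite (X i ` set_pmf M)"
    and finY: "finite (Y ` set_pmf M)"
    and Ync: "\<not> (\<exists>c. AE w in measure_pmf M. Y w = c)"
    and k: "k \<in> {1..n}"
    and g: "AE w in measure_pmf M. Y w = g (X k w)"
    and i: "i \<in> {1..n}"
  shows "FI M n X Y i \<le> FI M n X Y k"
proof (cases "i = k")
  case True then show ?thesis by simp
next
  case False
  define F where "F = {1..n::nat}"
  define c where "c = DD M Y / DD M Y"
  define D where "D T = Dep M (XS X T) Y" for T
  define wt :: "nat \<Rightarrow> real" where "wt s = fact s * fact (n - s - 1) / fact n" for s :: nat
  have wt0: "0 \<le> wt s" for s unfolding wt_def by simp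
  have fin: "finite (XS X T ` set_pmf M)" if "T \<subseteq> F" for T
    using that finX by (intro fin_XS) (auto simp: F_def intro: finite_subset)
  have Dle: "D T \<le> c" if "T \<subseteq> F" for T
    unfolding D_def c_def using Dep_le[OF fin[OF that] finY] .
  have Deq: "D T = c" if "T \<subseteq> F" "k \<in> T" for T
    unfolding D_def c_def
  proof (rule Dep_eq[OF fin[OF that(1)] finY, where h="\<lambda>f. g (the (f k))"])
    fix w assume "w \<in> set_pmf M"
    then show "Y w = g (the (XS X T w k))" using g that(2) by (simp add: AE_measure_pmf_iff XS_def)
  qed
  define P where "P = Pow (F - {i, k})"
  have finA: "finite (F - {i,k})" by (simp add: F_def)
  have Fi: "F - {i} = insert k (F - {i,k})" using k False by (auto simp: F_def)
  have Fk: "F - {k} = insert i (F - {i,k})" using i False by (auto simp: F_def)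
  have FIi: "FI M n X Y i = (\<Sum>S\<in>P. wt (card S) * (D (S \<union> {i}) - D S))"
  proof -
    have "FI M n X Y i = (\<Sum>S\<in>Pow (F - {i}). wt (card S) * (D (S \<union> {i}) - D S))"
      unfolding FI_def F_def wt_def D_def by (rule refl)
    also have "\<dots> = (\<Sum>S\<in>P. wt (card S) * (D (S \<union> {i}) - D S))
        + (\<Sum>S\<in>P. wt (card (insert k S)) * (D (insert k S \<union> {i}) - D (insert k S)))"
      unfolding Fi P_def by (rule sum_Pow_insert[OF finA]) simp
    also have "(\<Sum>S\<in>P. wt (card (insert k S)) * (D (insert k S \<union> {i}) - D (insert k S))) = 0"
    proof (rule sum.neutral, rule ballI)
      fix S assume "S \<in> P"
      then have "insert k S \<union> {i} \<subseteq> F" "insert k S \<subseteq> F" using i k by (auto simp: P_def F_def)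
      then show "wt (card (insert k S)) * (D (insert k S \<union> {i}) - D (insert k S)) = 0"
        using Deq[of "insert k S \<union> {i}"] Deq[of "insert k S"] by simp
    qed
    finally show ?thesis by simp
  qed
  have FIk: "FI M n X Y k = (\<Sum>S\<in>P. wt (card S) * (c - D S))
      + (\<Sum>S\<in>P. wt (card S + 1) * (c - D (S \<union> {i})))"
  proof -
    have "FI M n X Y k = (\<Sum>S\<in>Pow (F - {k}). wt (card S) * (D (S \<union> {k}) - D S))"
      unfolding FI_def F_def wt_def D_def by (rule refl)
    also have "\<dots> = (\<Sum>S\<in>P. wt (card S) * (D (S \<union> {k}) - D S))
        + (\<Sum>S\<in>P. wt (card (insert i S)) * (D (insert i S \<union> {k}) - D (insert i S)))"
      unfolding Fk P_def by (rule sum_Pow_insert[OF finA]) simp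
    also have "(\<Sum>S\<in>P. wt (card S) * (D (S \<union> {k}) - D S)) = (\<Sum>S\<in>P. wt (card S) * (c - D S))"
    proof (rule sum.cong[OF refl])
      fix S assume "S \<in> P"
      then have "S \<union> {k} \<subseteq> F" using i k by (auto simp: P_def F_def)
      then show "wt (card S) * (D (S \<union> {k}) - D S) = wt (card S) * (c - D S)"
        using Deq[of "S \<union> {k}"] by simp
    qed
    also have "(\<Sum>S\<in>P. wt (card (insert i S)) * (D (insert i S \<union> {k}) - D (insert i S)))
       = (\<Sum>S\<in>P. wt (card S + 1) * (c - D (S \<union> {i})))"
    proof (rule sum.cong[OF refl])
      fix S assume S: "S \<in> P"
      then have "finite S" "i \<notin> S" using finA by (auto simp: P_def intro: finite_subset)
      then have "card (insert i S) = card S + 1" by simp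
      moreover have "D (insert i S \<union> {k}) = c" using S i k by (intro Deq) (auto simp: P_def F_def)
      moreover have "D (insert i S) = D (S \<union> {i})" by simp
      ultimately show "wt (card (insert i S)) * (D (insert i S \<union> {k}) - D (insert i S))
         = wt (card S + 1) * (c - D (S \<union> {i}))" by simp
    qed
    finally show ?thesis .
  qed
  have "FI M n X Y k - FI M n X Y i = (\<Sum>S\<in>P. (wt (card S) + wt (card S + 1)) * (c - D (S \<union> {i})))"
  proof -
    have "FI M n X Y k - FI M n X Y i = (\<Sum>S\<in>P. wt (card S) * (c - D S) + wt (card S + 1) * (c - D (S \<union> {i})) - wt (card S) * (D (S \<union> {i}) - D S))"
      unfolding FIk FIi sum_subtractf sum.distrib by simp
    also have "\<dots> = (\<Sum>S\<in>P. (wt (card S) + wt (card S + 1)) * (c - D (S \<union> {i})))"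
      by (rule sum.cong[OF refl]) (simp add: algebra_simps)
    finally show ?thesis .
  qed
  also have "\<dots> \<ge> 0"
  proof (rule sum_nonneg)
    fix S assume "S \<in> P"
    then have "S \<union> {i} \<subseteq> F" using i by (auto simp: P_def F_def)
    then have "0 \<le> c - D (S \<union> {i})" using Dle by simp
    then show "0 \<le> (wt (card S) + wt (card S + 1)) * (c - D (S \<union> {i}))"
      using wt0 by simp
  qed
  finally show ?thesis by simp
qed

end
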